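(* Let $G$ be a connected cubic graph and let $\mathfrak{T}$ be a spanning tree of $G$ produced by the following algorithm. Fix an indexing $w_1,\dots,w_n$ of $V(G)$ and a root $u\in V(G)$. Let $S_0=\{u\}$ and, for $i\geq 1$, let $S_i$ be the set of vertices at distance exactly $i$ from $u$. Delete every edge of $G$ with both endpoints in the same set $S_i$. Whenever two vertices $w_k,w_s\in S_i$ have a common neighbor $x\in S_{i+1}$, where $w_k$ precedes $w_s$ in the order comparing first by degree and then by index, delete the edge $w_kx$ (so each $x\in S_{i+1}$ keeps exactly one edge to $S_i$). Let $n_3$ denote the number of vertices of degree $3$ in $\mathfrak{T}$. Then $Z(\mathfrak{T})\leq n_3+2$.
   Context: Zero forcing: color each vertex of a graph $H$ black or white; if a black vertex has exactly one white neighbor, that neighbor is recolored black. A set $Z\subseteq V(H)$ is a zero forcing set if starting with exactly $Z$ black and applying this rule repeatedly makes all vertices black; the zero forcing number $Z(H)$ is the minimum size of a zero forcing set. A cubic graph is a $3$-regular simple graph. *)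

theory Defs
  imports Main
begin

definition simple_graph :: "'a set \<Rightarrow> ('a \<Rightarrow> 'a \<Rightarrow> bool) \<Rightarrow> bool" where
  "simple_graph V E \<longleftrightarrow> finite V \<and> (\<forall>a b. E a b \<longrightarrow> E b a) \<and> (\<forall>a. \<not> E a a)
     \<and> (\<forall>a b. E a b \<longrightarrow> a \<in> V \<and> b \<in> V)"

definition degree :: "'a set \<Rightarrow> ('a \<Rightarrow> 'a \<Rightarrow> bool) \<Rightarrow> 'a \<Rightarrow> nat" where
  "degree V E v = card {w \<in> V. E v w}"

definition cubic :: "'a set \<Rightarrow> ('a \<Rightarrow> 'a \<Rightarrow> bool) \<Rightarrow> bool" where
  "cubic V E \<longleftrightarrow> simple_graph V E \<and> (\<forall>v\<in>V. degree V E v = 3)"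

fun walk :: "('a \<Rightarrow> 'a \<Rightarrow> bool) \<Rightarrow> nat \<Rightarrow> 'a \<Rightarrow> 'a \<Rightarrow> bool" where
  "walk E 0 a b = (a = b)"
| "walk E (Suc n) a b = (\<exists>c. E a c \<and> walk E n c b)"

definition connected_graph :: "'a set \<Rightarrow> ('a \<Rightarrow> 'a \<Rightarrow> bool) \<Rightarrow> bool" where
  "connected_graph V E \<longleftrightarrow> V \<noteq> {} \<and> (\<forall>a\<in>V. \<forall>b\<in>V. \<exists>n. walk E n a b)"

definition gdist :: "('a \<Rightarrow> 'a \<Rightarrow> bool) \<Rightarrow> 'a \<Rightarrow> 'a \<Rightarrow> nat" where
  "gdist E a b = (LEAST n. walk E n a b)"

text \<open>The algorithm. Step 1: delete every edge with both endpoints at the same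
distance from the root u (i.e. in the same layer S_i).\<close>
definition layer_pruned :: "('a \<Rightarrow> 'a \<Rightarrow> bool) \<Rightarrow> 'a \<Rightarrow> 'a \<Rightarrow> 'a \<Rightarrow> bool" where
  "layer_pruned E u a b \<longleftrightarrow> E a b \<and> gdist E u a \<noteq> gdist E u b"

text \<open>Order used to decide which edge is kept: compare first by degree (in the
graph obtained after Step 1), then by index.  a precedes b iff
(deg a, idx a) < (deg b, idx b) lexicographically.\<close>
definition precedes :: "'a set \<Rightarrow> ('a \<Rightarrow> 'a \<Rightarrow> bool) \<Rightarrow> 'a \<Rightarrow> ('a \<Rightarrow> nat) \<Rightarrow> 'a \<Rightarrow> 'a \<Rightarrow> bool" where
  "precedes V E u idx a b \<longleftrightarrow>
     (let d = degree V (layer_pruned E u) in d a < d b \<or> (d a = d b \<and> idx a < idx b))"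

text \<open>Step 2: a vertex x in S_(i+1) keeps only its edge to the neighbour p in S_i
that every other neighbour of x in S_i precedes (an edge w x is deleted whenever
w precedes another neighbour of x in S_i).\<close>
definition is_parent :: "'a set \<Rightarrow> ('a \<Rightarrow> 'a \<Rightarrow> bool) \<Rightarrow> 'a \<Rightarrow> ('a \<Rightarrow> nat) \<Rightarrow> 'a \<Rightarrow> 'a \<Rightarrow> bool" where
  "is_parent V E u idx p x \<longleftrightarrow>
     E p x \<and> gdist E u x = gdist E u p + 1 \<and>
     (\<forall>c. E c x \<and> gdist E u c = gdist E u p \<and> c \<noteq> p \<longrightarrow> precedes V E u idx c p)"

definition alg_tree :: "'a set \<Rightarrow> ('a \<Rightarrow> 'a \<Rightarrow> bool) \<Rightarrow> 'a \<Rightarrow> ('a \<Rightarrow> nat) \<Rightarrow> 'a \<Rightarrow> 'a \<Rightarrow> bool" where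
  "alg_tree V E u idx a b \<longleftrightarrow> is_parent V E u idx a b \<or> is_parent V E u idx b a"

text \<open>Zero forcing.  The set of vertices eventually black when starting from Z
and applying the colour-change rule repeatedly (a black vertex v whose only white
neighbour is w forces w).\<close>
inductive_set forced_closure :: "'a set \<Rightarrow> ('a \<Rightarrow> 'a \<Rightarrow> bool) \<Rightarrow> 'a set \<Rightarrow> 'a set"
  for V E Z where
  init: "z \<in> Z \<Longrightarrow> z \<in> forced_closure V E Z"
| force: "\<lbrakk> v \<in> forced_closure V E Z; v \<in> V; w \<in> V; E v w;
            \<forall>x\<in>V. E v x \<and> x \<noteq> w \<longrightarrow> x \<in> forced_closure V E Z \<rbrakk>
          \<Longrightarrow> w \<in> forced_closure V E Z"

definition zero_forcing_set :: "'a set \<Rightarrow> ('a \<Rightarrow> 'a \<Rightarrow> bool) \<Rightarrow> 'a set \<Rightarrow> bool" where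
  "zero_forcing_set V E Z \<longleftrightarrow> Z \<subseteq> V \<and> V \<subseteq> forced_closure V E Z"

definition zero_forcing_number :: "'a set \<Rightarrow> ('a \<Rightarrow> 'a \<Rightarrow> bool) \<Rightarrow> nat" where
  "zero_forcing_number V E = (LEAST k. \<exists>Z. zero_forcing_set V E Z \<and> card Z = k)"

end

theory Submission
  imports Defs "HOL-Library.Product_Lexorder"
begin

lemma walk_snoc: "walk E (Suc n) a b \<longleftrightarrow> (\<exists>c. walk E n a c \<and> E c b)"
  by (induction n arbitrary: a) auto

lemma gdist_walk: "walk E n u x \<Longrightarrow> walk E (gdist E u x) u x \<and> gdist E u x \<le> n"
  unfolding gdist_def by (metis LeastI Least_le)

lemma gdist_self: "gdist E u u = 0"
  unfolding gdist_def by (rule Least_eq_0) simp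

lemma parent_exists:
  assumes sg: "simple_graph V E" and inj: "inj_on idx V" and x: "x \<in> V" "x \<noteq> u"
    and w: "walk E n u x"
  shows "\<exists>p. is_parent V E u idx p x"
proof -
  have wx: "walk E (gdist E u x) u x" using gdist_walk[OF w] by blast
  have "gdist E u x \<noteq> 0" using wx x by (cases "gdist E u x") auto
  then obtain k where k: "gdist E u x = Suc k" using not0_implies_Suc by blast
  define P where "P = {p. E p x \<and> gdist E u p = k}"
  have PV: "P \<subseteq> V" using sg unfolding P_def simple_graph_def by blast
  have finP: "finite P" using PV sg finite_subset unfolding simple_graph_def by blast
  obtain q where q: "walk E k u q" "E q x" using wx k walk_snoc by metis
  have "gdist E u q = k"
  proof (rule ccontr)
    assume "gdist E u q \<noteq> k"
    with gdist_walk[OF q(1)] have lt: "gdist E u q < k" by auto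
    have "walk E (Suc (gdist E u q)) u x" using gdist_walk[OF q(1)] q(2) walk_snoc by metis
    then have "gdist E u x \<le> Suc (gdist E u q)" using gdist_walk by metis
    with lt k show False by simp
  qed
  then have "q \<in> P" using q unfolding P_def by blast
  define key where "key = (\<lambda>a. (degree V (layer_pruned E u) a, idx a))"
  have ne: "key ` P \<noteq> {}" using \<open>q \<in> P\<close> by blast
  have "Max (key ` P) \<in> key ` P" using Max_in[OF _ ne] finP by blast
  then obtain p where pP: "p \<in> P" and pm: "key p = Max (key ` P)" by force
  have "\<forall>c. E c x \<and> gdist E u c = gdist E u p \<and> c \<noteq> p \<longrightarrow> precedes V E u idx c p"
  proof (intro allI impI)
    fix c assume c: "E c x \<and> gdist E u c = gdist E u p \<and> c \<noteq> p"
    then have cP: "c \<in> P" using pP unfolding P_def by auto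
    then have "key c \<le> key p" using pm finP by simp
    moreover have "key c \<noteq> key p" using c cP pP PV inj unfolding key_def inj_on_def by auto
    ultimately have "key c < key p" by simp
    then show "precedes V E u idx c p" unfolding key_def precedes_def Let_def by auto
  qed
  then have "is_parent V E u idx p x" using pP k unfolding P_def is_parent_def by auto
  then show ?thesis by blast
qed

theorem mainTheorem4:
  fixes V :: "'a set" and E :: "'a \<Rightarrow> 'a \<Rightarrow> bool" and u :: 'a and idx :: "'a \<Rightarrow> nat"
  assumes "cubic V E"
    and "connected_graph V E"
    and "bij_betw idx V {1..card V}"
    and "u \<in> V"
  shows "zero_forcing_number V (alg_tree V E u idx)
           \<le> card {v \<in> V. degree V (alg_tree V E u idx) v = 3} + 2"
proof -
  have sg: "simple_graph V E" and deg3: "\<forall>v\<in>V. degree V E v = 3"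
    using assms(1) unfolding cubic_def by auto
  have finV: "finite V" using sg unfolding simple_graph_def by auto
  have inj: "inj_on idx V" using assms(3) bij_betw_imp_inj_on by blast
  have reach: "\<And>y. y \<in> V \<Longrightarrow> \<exists>n. walk E n u y" using assms(2,4) unfolding connected_graph_def by blast
  have par: "\<And>y. y \<in> V \<Longrightarrow> y \<noteq> u \<Longrightarrow> \<exists>p. is_parent V E u idx p y"
    using parent_exists[OF sg inj] reach by blast
  have ipE: "\<And>p w. is_parent V E u idx p w \<Longrightarrow> E p w \<and> E w p \<and> p \<in> V \<and> w \<in> V
       \<and> gdist E u w = gdist E u p + 1"
    using sg unfolding is_parent_def simple_graph_def by blast
  define T where "T = alg_tree V E u idx"
  define c where "c = (\<lambda>p. SOME w. is_parent V E u idx p w)"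
  define ch where "ch = (\<lambda>p. {w\<in>V. is_parent V E u idx p w})"
  define pa where "pa = (\<lambda>p. {w\<in>V. is_parent V E u idx w p})"
  define Z where "Z = insert u (\<Union>p\<in>V. ch p - {c p})"
  have ZV: "Z \<subseteq> V" using assms(4) unfolding Z_def ch_def by auto
  have clos: "\<forall>y\<in>V. gdist E u y = n \<longrightarrow> y \<in> forced_closure V T Z" for n
  proof (induction n rule: less_induct)
    case (less n)
    show ?case
    proof (intro ballI impI)
      fix y assume y: "y \<in> V" "gdist E u y = n"
      show "y \<in> forced_closure V T Z"
      proof (cases "y \<in> Z")
        case True then show ?thesis by (rule forced_closure.init)
      next
        case False
        then have yu: "y \<noteq> u" unfolding Z_def by auto
        obtain p where pp: "is_parent V E u idx p y" using par[OF y(1) yu] by blast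
        have pV: "p \<in> V" and pd: "gdist E u p < n" using ipE[OF pp] y by auto
        have yc: "y = c p" using False pp pV y unfolding Z_def ch_def by auto
        have pb: "p \<in> forced_closure V T Z" using less.IH[OF pd] pV by blast
        show ?thesis
        proof (rule forced_closure.force[OF pb pV y(1)])
          show "T p y" unfolding T_def alg_tree_def using pp by simp
          show "\<forall>x\<in>V. T p x \<and> x \<noteq> y \<longrightarrow> x \<in> forced_closure V T Z"
          proof (intro ballI impI)
            fix x assume x: "x \<in> V" "T p x \<and> x \<noteq> y"
            then consider "is_parent V E u idx p x" | "is_parent V E u idx x p"
              unfolding T_def alg_tree_def by blast
            then show "x \<in> forced_closure V T Z"
            proof cases
              case 1
              then have "x \<in> Z" using x yc pV unfolding Z_def ch_def by auto
              then show ?thesis by (rule forced_closure.init)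
            next
              case 2
              then have "gdist E u x < n" using ipE[OF 2] pd by simp
              then show ?thesis using less.IH x by blast
            qed
          qed
        qed
      qed
    qed
  qed
  have zfs: "zero_forcing_set V T Z" unfolding zero_forcing_set_def using ZV clos by blast
  have zle: "zero_forcing_number V T \<le> card Z"
    unfolding zero_forcing_number_def by (rule Least_le) (use zfs in blast)
  define g where "g = (\<lambda>p. (if degree V T p = 3 then 1 else 0) + (if p = u then 1 else 0::nat))"
  have fle: "card (ch p - {c p}) \<le> g p" if pV: "p \<in> V" for p
  proof -
    have finA: "finite (ch p)" and finB: "finite (pa p)" using finV unfolding ch_def pa_def by auto
    have disj: "ch p \<inter> pa p = {}"
    proof (rule ccontr)
      assume "ch p \<inter> pa p \<noteq> {}"
      then obtain w where "is_parent V E u idx p w" "is_parent V E u idx w p"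
        unfolding ch_def pa_def by blast
      from ipE[OF this(1)] ipE[OF this(2)] show False by simp
    qed
    have "{w\<in>V. T p w} = ch p \<union> pa p" unfolding T_def alg_tree_def ch_def pa_def by auto
    then have dT: "degree V T p = card (ch p) + card (pa p)"
      unfolding degree_def using card_Un_disjoint[OF finA finB disj] by simp
    have "{w\<in>V. T p w} \<subseteq> {w\<in>V. E p w}" unfolding T_def alg_tree_def using ipE by blast
    then have "degree V T p \<le> degree V E p" unfolding degree_def
      using finV by (intro card_mono) auto
    then have d3: "degree V T p \<le> 3" using deg3 pV by simp
    have pu: "p \<noteq> u \<Longrightarrow> card (pa p) \<ge> 1"
    proof -
      assume "p \<noteq> u"
      then obtain q where "is_parent V E u idx q p" using par pV by blast
      then have "q \<in> pa p" unfolding pa_def using ipE by blast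
      then show ?thesis using finB card_0_eq by fastforce
    qed
    show ?thesis
    proof (cases "ch p = {}")
      case True then show ?thesis by simp
    next
      case False
      then obtain w where "is_parent V E u idx p w" unfolding ch_def by blast
      then have "is_parent V E u idx p (c p)" unfolding c_def by (rule someI)
      then have "c p \<in> ch p" unfolding ch_def using ipE by blast
      then have f: "card (ch p - {c p}) = card (ch p) - 1" by simp
      show ?thesis using f dT d3 pu unfolding g_def by (cases "p = u") auto
    qed
  qed
  have "card Z \<le> 1 + card (\<Union>p\<in>V. ch p - {c p})" unfolding Z_def
    using finV unfolding ch_def by (simp add: card_insert_if)
  also have "\<dots> \<le> 1 + (\<Sum>p\<in>V. card (ch p - {c p}))" using card_UN_le[OF finV] by simp
  also have "\<dots> \<le> 1 + (\<Sum>p\<in>V. g p)" using fle by (simp add: sum_mono)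
  also have "(\<Sum>p\<in>V. g p) = card {v \<in> V. degree V T v = 3} + 1"
    unfolding g_def using finV assms(4)
    by (simp add: sum.distrib sum.inter_filter[symmetric])
  finally show ?thesis using zle unfolding T_def by simp
qed

end
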